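(* Let $x\in\mathbb{R}$ and let $f:\mathbb{R}\to\mathbb{R}$ be analytic and nonzero on the closed interval between $0$ and $x$, with $f(0)=1$, and suppose $f(y)=\exp\big(\sum_{i=1}^{\infty}c_i y^i\big)$ for all $y$ in that interval, the series converging there; put $f_k(y)=\exp(c_k y^k)$. For $r>1$, a finite nonempty set $\mathcal{S}\subset\mathbb{N}^*$ and a family of positive integers $(n_j)_{j\in\mathcal{S}}$, write \[ \mathcal{S}\circ x=\Big[\prod_{j\in\mathcal{S}}\frac{(r^j-1)^{1/j}}{r^{n_j}}\Big]x . \] Then for every positive integer $k$, \[ f_k(x)=\lim_{r\downarrow1}\ \frac{\prod_{\mathcal{S}:\,\max\mathcal{S}=k,\ |\mathcal{S}|\text{ odd}}\ \prod_{(n_j)_{j\in\mathcal{S}},\,n_j\ge1} f(\mathcal{S}\circ x)}{\prod_{\mathcal{S}:\,\max\mathcal{S}=k,\ |\mathcal{S}|\text{ even}}\ \prod_{(n_j)_{j\in\mathcal{S}},\,n_j\ge1} f(\mathcal{S}\circ x)}, \] where $\mathcal{S}$ ranges over subsets of $\mathbb{N}^*$ whose largest element is $k$, and for each such $\mathcal{S}$ all indices $n_j$, $j\in\mathcal{S}$, range independently over the positive integers.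
   Context: $\mathbb{N}^*$ is the set of positive integers. The $c_i$ are the Taylor coefficients at $0$ of $\log f$ and $f_k$ is called the $k$-th component of $f$. *)

theory Defs
  imports "HOL-Analysis.Analysis"
begin

definition real_analytic_on :: "(real \<Rightarrow> real) \<Rightarrow> real set \<Rightarrow> bool" where
  "real_analytic_on f A \<longleftrightarrow>
     (\<forall>a\<in>A. \<exists>\<rho>>0. \<exists>b::nat \<Rightarrow> real.
        \<forall>y. \<bar>y - a\<bar> < \<rho> \<longrightarrow> (\<lambda>n. b n * (y - a) ^ n) sums f y)"

definition between0 :: "real \<Rightarrow> real set" where
  "between0 x = {min 0 x .. max 0 x}"

definition has_prod_on :: "('a \<Rightarrow> real) \<Rightarrow> 'a set \<Rightarrow> real \<Rightarrow> bool" where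
  "has_prod_on g A P \<longleftrightarrow> ((\<lambda>F. prod g F) \<longlongrightarrow> P) (finite_subsets_at_top A)"

definition prod_on :: "('a \<Rightarrow> real) \<Rightarrow> 'a set \<Rightarrow> real" where
  "prod_on g A = (THE P. has_prod_on g A P)"

definition scomp :: "real \<Rightarrow> nat set \<Rightarrow> (nat \<Rightarrow> nat) \<Rightarrow> real \<Rightarrow> real" where
  "scomp r S n x = (\<Prod>j\<in>S. (r ^ j - 1) powr (1 / real j) / r ^ (n j)) * x"

definition families :: "nat set \<Rightarrow> (nat \<Rightarrow> nat) set" where
  "families S = PiE S (\<lambda>_. {1..})"

end

theory Submission
  imports Defs
begin

definition aa :: "real \<Rightarrow> nat \<Rightarrow> real" where
  "aa r j = (r ^ j - 1) powr (1 / real j)"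

definition gg :: "real \<Rightarrow> nat \<Rightarrow> nat \<Rightarrow> real" where
  "gg r j i = aa r j ^ Suc i / (r ^ Suc i - 1)"

lemma aa_pos: assumes "1 < r" "1 \<le> j" shows "0 < aa r j"
proof -
  have "1 < r ^ j" using assms by (simp add: one_less_power)
  thus ?thesis unfolding aa_def by simp
qed

lemma aa_pow: assumes "1 < r" "1 \<le> j" shows "aa r j ^ j = r ^ j - 1"
proof -
  have b: "0 < r ^ j - 1" using assms by (simp add: one_less_power)
  have "aa r j ^ j = aa r j powr real j" using aa_pos[OF assms] by (simp add: powr_realpow)
  also have "\<dots> = (r ^ j - 1) powr (1 / real j * real j)" unfolding aa_def by (simp add: powr_powr)
  also have "\<dots> = r ^ j - 1" using assms b by simp
  finally show ?thesis .
qed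

lemma aa_lt1: assumes "1 < r" "1 \<le> j" "r ^ j - 1 < 1" shows "aa r j < 1"
proof (rule ccontr)
  assume "\<not> aa r j < 1"
  hence "1 \<le> aa r j ^ j" by (simp add: one_le_power)
  thus False using aa_pow[OF assms(1,2)] assms(3) by simp
qed

lemma aa_le_half: assumes "1 < r" "1 \<le> k" "r ^ k - 1 \<le> (1/2) ^ k" shows "aa r k \<le> 1/2"
proof -
  obtain m where m: "k = Suc m" using assms(2) by (cases k) auto
  have "aa r k ^ Suc m \<le> (1/2) ^ Suc m" using aa_pow[OF assms(1,2)] assms(3) m by simp
  thus ?thesis by (rule power_le_imp_le_base) simp
qed

lemma gg_bounds:
  assumes "1 < r" "1 \<le> j" "j \<le> Suc i" "r ^ j - 1 < 1"
  shows "0 \<le> gg r j i" "gg r j i \<le> aa r j ^ (Suc i - j)"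
proof -
  have ap: "0 < aa r j" by (rule aa_pos[OF assms(1,2)])
  have d: "0 < r ^ Suc i - 1" using assms one_less_power[of r "Suc i"] by simp
  show "0 \<le> gg r j i" unfolding gg_def using ap d by simp
  have le: "r ^ j - 1 \<le> r ^ Suc i - 1" using assms power_increasing[of j "Suc i" r] by simp
  have "aa r j ^ Suc i = aa r j ^ j * aa r j ^ (Suc i - j)"
    using assms(3) by (simp flip: power_add)
  also have "\<dots> = (r ^ j - 1) * aa r j ^ (Suc i - j)" using aa_pow[OF assms(1,2)] by simp
  finally have e: "aa r j ^ Suc i = (r ^ j - 1) * aa r j ^ (Suc i - j)" .
  have "(r ^ j - 1) * aa r j ^ (Suc i - j) \<le> (r ^ Suc i - 1) * aa r j ^ (Suc i - j)"
    using le ap by (intro mult_right_mono) auto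
  thus "gg r j i \<le> aa r j ^ (Suc i - j)" unfolding gg_def e using d by (simp add: divide_le_eq mult.commute)
qed

lemma gg_diag: assumes "1 < r" "1 \<le> j" shows "gg r j (j - 1) = 1"
proof -
  have "Suc (j - 1) = j" using assms by simp
  moreover have "0 < r ^ j - 1" using assms by (simp add: one_less_power)
  ultimately show ?thesis unfolding gg_def using aa_pow[OF assms] by simp
qed

lemma aa_tendsto: assumes "1 \<le> j" shows "((\<lambda>r. aa r j) \<longlongrightarrow> 0) (at_right 1)"
  unfolding aa_def
proof (rule tendsto_zero_powrI)
  have "((\<lambda>r::real. r ^ j - 1) \<longlongrightarrow> 1 ^ j - 1) (at_right 1)"
    by (intro tendsto_intros)
  thus "((\<lambda>r::real. r ^ j - 1) \<longlongrightarrow> 0) (at_right 1)" by simp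
  show "((\<lambda>r. 1 / real j) \<longlongrightarrow> 1 / real j) (at_right 1)" by simp
  show "\<forall>\<^sub>F r in at_right 1. 0 \<le> r ^ j - (1::real)"
    unfolding eventually_at_right_field by (intro exI[of _ 2]) (auto simp: one_le_power)
  show "0 < 1 / real j" using assms by simp
qed

lemma pw: "(a / b ^ m) ^ e = a ^ e * inverse (b ^ e) ^ m" for a b :: real
proof -
  have "(a / b ^ m) ^ e = a ^ e / (b ^ m) ^ e" by (rule power_divide)
  also have "(b ^ m) ^ e = (b ^ e) ^ m" by (simp only: power_mult[symmetric] mult.commute)
  also have "a ^ e / (b ^ e) ^ m = a ^ e * inverse (b ^ e) ^ m" by (simp only: divide_inverse power_inverse)
  finally show ?thesis .
qed

lemma scomp_pow:
  "scomp r S n x ^ Suc i = x ^ Suc i * (\<Prod>j\<in>S. aa r j ^ Suc i * inverse (r ^ Suc i) ^ n j)"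
proof -
  have "scomp r S n x ^ Suc i = (\<Prod>j\<in>S. aa r j / r ^ n j) ^ Suc i * x ^ Suc i"
    unfolding scomp_def aa_def by (simp only: power_mult_distrib)
  also have "(\<Prod>j\<in>S. aa r j / r ^ n j) ^ Suc i = (\<Prod>j\<in>S. (aa r j / r ^ n j) ^ Suc i)"
    by (simp only: prod_power_distrib)
  also have "\<dots> = (\<Prod>j\<in>S. aa r j ^ Suc i * inverse (r ^ Suc i) ^ n j)"
  proof (intro prod.cong refl)
    fix j
    show "(aa r j / r ^ n j) ^ Suc i = aa r j ^ Suc i * inverse (r ^ Suc i) ^ n j"
      by (rule pw)
  qed
  finally show ?thesis by simp
qed

lemma geo_has_sum:
  fixes r :: real
  assumes "1 < r"
  shows "((\<lambda>m. inverse (r ^ Suc i) ^ m) has_sum (1 / (r ^ Suc i - 1))) {1..}"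
proof -
  have rp: "1 < r ^ Suc i" using assms one_less_power[of r "Suc i"] by simp
  have "norm (inverse (r ^ Suc i)) < 1"
  proof -
    define R where "R = r ^ Suc i"
    have "1 < R" using rp R_def by simp
    hence "norm (inverse R) < 1" by (simp add: inverse_less_1_iff)
    thus ?thesis by (simp only: R_def)
  qed
  from has_sum_geometric_from_1[OF this]
  have "((\<lambda>m. inverse (r ^ Suc i) ^ m) has_sum (inverse (r ^ Suc i) / (1 - inverse (r ^ Suc i)))) {1..}" .
  also have "inverse (r ^ Suc i) / (1 - inverse (r ^ Suc i)) = 1 / (r ^ Suc i - 1)"
  proof -
    have "inverse R / (1 - inverse R) = 1 / (R - 1)" if "1 < R" for R :: real
      using that by (simp add: field_simps)
    thus ?thesis using rp by blast
  qed
  finally show ?thesis .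
qed

lemma inner_has_sum:
  fixes r :: real
  assumes "1 < r" "finite S" "S \<subseteq> {1..}"
  shows "((\<lambda>n. \<Prod>j\<in>S. aa r j ^ Suc i * inverse (r ^ Suc i) ^ n j) has_sum (\<Prod>j\<in>S. gg r j i)) (families S)"
proof -
  define h where "h j m = aa r j ^ Suc i * inverse (r ^ Suc i) ^ m" for j m
  have hs: "(h j has_sum gg r j i) {1..}" for j
  proof -
    have "((\<lambda>m. aa r j ^ Suc i * inverse (r ^ Suc i) ^ m) has_sum (aa r j ^ Suc i * (1 / (r ^ Suc i - 1)))) {1..}"
      by (rule has_sum_cmult_right[OF geo_has_sum[OF assms(1)]])
    thus ?thesis unfolding h_def gg_def by (simp only: times_divide_eq_right mult_1_right)
  qed
  have hnn: "0 \<le> h j m" if "j \<in> S" for j m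
    using aa_pos[OF assms(1), of j] that assms(3) assms(1) unfolding h_def by auto
  have habs: "(\<lambda>m. norm (h j m)) summable_on {1..}" if "j \<in> S" for j
  proof -
    have "h j summable_on {1..}" using hs unfolding summable_on_def by blast
    moreover have "(\<lambda>m. norm (h j m)) = h j" using hnn[OF that] by (auto simp: fun_eq_iff)
    ultimately show ?thesis by simp
  qed
  have habs': "Infinite_Set_Sum.abs_summable_on (h j) {1..}" if "j \<in> S" for j
    using habs[OF that] abs_summable_equivalent by blast
  have "Infinite_Set_Sum.abs_summable_on (\<lambda>g. \<Prod>j\<in>S. h j (g j)) (PiE S (\<lambda>_. {1..}))"
    by (rule abs_summable_on_prod_PiE) (use assms(2) habs' in auto)
  hence "(\<lambda>g. norm (\<Prod>j\<in>S. h j (g j))) summable_on PiE S (\<lambda>_. {1..})"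
    by (rule abs_summable_equivalent[THEN iffD2])
  hence sm: "(\<lambda>g. \<Prod>j\<in>S. h j (g j)) summable_on PiE S (\<lambda>_. {1..})"
    by (rule abs_summable_summable)
  have hs': "h j summable_on {1..}" for j using hs unfolding summable_on_def by blast
  have "infsum (\<lambda>g. \<Prod>j\<in>S. h j (g j)) (PiE S (\<lambda>_. {1..})) = (\<Prod>j\<in>S. infsum (h j) {1..})"
    by (rule infsum_prod_PiE[OF assms(2) hs' sm])
  also have "\<dots> = (\<Prod>j\<in>S. gg r j i)" using hs infsumI by metis
  finally have "((\<lambda>g. \<Prod>j\<in>S. h j (g j)) has_sum (\<Prod>j\<in>S. gg r j i)) (PiE S (\<lambda>_. {1..}))"
    using sm has_sum_iff by blast
  moreover have "(\<lambda>g. \<Prod>j\<in>S. h j (g j)) = (\<lambda>n. \<Prod>j\<in>S. aa r j ^ Suc i * inverse (r ^ Suc i) ^ n j)"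
    unfolding h_def by simp
  ultimately show ?thesis unfolding families_def by simp
qed

lemma tail_summ:
  fixes c :: "nat \<Rightarrow> real" and x s :: real
  assumes sx: "summable (\<lambda>i. c (Suc i) * x ^ Suc i)" and s: "0 < s" "s < 1"
  shows "summable (\<lambda>i. \<bar>c (Suc i) * x ^ Suc i\<bar> * s ^ i)"
proof (cases "x = 0")
  case True thus ?thesis by simp
next
  case False
  have "summable (\<lambda>n. (c (Suc n) * x) * x ^ n)"
    using sx by (simp add: mult.assoc)
  moreover have "norm (s * x) < norm x" using False s by (simp add: abs_mult)
  ultimately have "summable (\<lambda>n. norm ((c (Suc n) * x) * (s * x) ^ n))"
    by (rule powser_insidea)
  moreover have "norm ((c (Suc n) * x) * (s * x) ^ n) = \<bar>c (Suc n) * x ^ Suc n\<bar> * s ^ n" for n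
    using s by (simp add: abs_mult power_mult_distrib power_abs mult_ac)
  ultimately show ?thesis by simp
qed

lemma tail_summ2:
  fixes c :: "nat \<Rightarrow> real" and x s :: real
  assumes sx: "summable (\<lambda>i. c (Suc i) * x ^ Suc i)" and s: "0 < s" "s < 1" and k: "1 \<le> k"
  shows "summable (\<lambda>i. \<bar>c (Suc i) * x ^ Suc i\<bar> * s ^ (Suc i - k))"
proof (rule summable_comparison_test')
  show "summable (\<lambda>i. \<bar>c (Suc i) * x ^ Suc i\<bar> * s ^ i * inverse (s ^ (k - 1)))"
    by (rule summable_mult2[OF tail_summ[OF sx s]])
  fix i assume i: "i \<ge> k - 1"
  have "s ^ i = s ^ (k - 1) * s ^ (Suc i - k)"
    using i k by (simp flip: power_add)
  hence "s ^ (Suc i - k) = s ^ i * inverse (s ^ (k - 1))" using s by (simp add: field_simps)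
  thus "norm (\<bar>c (Suc i) * x ^ Suc i\<bar> * s ^ (Suc i - k)) \<le> \<bar>c (Suc i) * x ^ Suc i\<bar> * s ^ i * inverse (s ^ (k - 1))"
    using s by simp
qed

lemma main_S:
  fixes c :: "nat \<Rightarrow> real" and x r :: real and S :: "nat set" and L :: "(nat \<Rightarrow> nat) \<Rightarrow> real"
  assumes sx: "summable (\<lambda>i. c (Suc i) * x ^ Suc i)"
    and r1: "1 < r" and rk: "r ^ k - 1 < 1" and k: "1 \<le> k" and S: "S \<subseteq> {1..k}" and kS: "k \<in> S"
    and L: "\<And>n. n \<in> families S \<Longrightarrow> (\<lambda>i. c (Suc i) * scomp r S n x ^ Suc i) sums L n"
  shows "(L has_sum (\<Sum>i. c (Suc i) * x ^ Suc i * (\<Prod>j\<in>S. gg r j i))) (families S)"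
    and "summable (\<lambda>i. c (Suc i) * x ^ Suc i * (\<Prod>j\<in>S. gg r j i))"
proof -
  define d where "d i = c (Suc i) * x ^ Suc i" for i
  define u where "u i n = (\<Prod>j\<in>S. aa r j ^ Suc i * inverse (r ^ Suc i) ^ n j)" for i and n :: "nat \<Rightarrow> nat"
  define U where "U i = (\<Prod>j\<in>S. gg r j i)" for i
  define T where "T p = d (fst p) * u (fst p) (snd p)" for p
  have fS: "finite S" using S finite_subset by blast
  have S1: "S \<subseteq> {1..}" using S by auto
  have uhs: "(u i has_sum U i) (families S)" for i
    unfolding u_def U_def by (rule inner_has_sum[OF r1 fS S1])
  have unn: "0 \<le> u i n" for i n
    unfolding u_def
  proof (intro prod_nonneg)
    fix j assume "j \<in> S"
    hence a: "0 \<le> aa r j" using aa_pos[OF r1, of j] S1 by auto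
    have b: "0 \<le> inverse (r ^ Suc i)" using r1 by simp
    show "0 \<le> aa r j ^ Suc i * inverse (r ^ Suc i) ^ n j"
      using a b by (intro mult_nonneg_nonneg zero_le_power)
  qed
  have rj: "r ^ j - 1 < 1" if "j \<in> S" for j
  proof -
    have "r ^ j \<le> r ^ k" using S that r1 by (intro power_increasing) auto
    thus ?thesis using rk by simp
  qed
  have ggnn: "0 \<le> gg r j i" if "j \<in> S" for j i
  proof -
    have "0 < r ^ Suc i - 1" using r1 one_less_power[of r "Suc i"] by simp
    moreover have "0 \<le> aa r j" using aa_pos[OF r1, of j] S1 that by auto
    ultimately show ?thesis unfolding gg_def by (intro divide_nonneg_nonneg zero_le_power) auto
  qed
  have Unn: "0 \<le> U i" for i unfolding U_def using ggnn by (intro prod_nonneg) auto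
  have ak: "0 < aa r k" "aa r k < 1" using aa_pos[OF r1 k] aa_lt1[OF r1 k rk] by auto
  have Ub: "U i \<le> aa r k ^ (Suc i - k)" if i: "k - 1 \<le> i" for i
  proof -
    have ki: "k \<le> Suc i" using i by simp
    have P1: "(\<Prod>j\<in>S - {k}. gg r j i) \<le> 1"
    proof (rule prod_le_1)
      fix j assume j: "j \<in> S - {k}"
      have j1: "1 \<le> j" "j \<le> Suc i" using S j ki by auto
      have "gg r j i \<le> aa r j ^ (Suc i - j)" using gg_bounds(2)[OF r1 j1 rj] j by auto
      also have "\<dots> \<le> 1" using aa_pos[OF r1 j1(1)] aa_lt1[OF r1 j1(1) rj] j
        by (intro power_le_one) auto
      finally show "0 \<le> gg r j i \<and> gg r j i \<le> 1" using ggnn j by auto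
    qed
    have P0: "0 \<le> (\<Prod>j\<in>S - {k}. gg r j i)" using ggnn by (intro prod_nonneg) auto
    have "U i = gg r k i * (\<Prod>j\<in>S - {k}. gg r j i)"
      unfolding U_def using fS kS by (simp add: prod.remove)
    also have "\<dots> \<le> gg r k i" using P1 P0 ggnn[OF kS, of i] by (simp add: mult_left_le)
    also have "\<dots> \<le> aa r k ^ (Suc i - k)" using gg_bounds(2)[OF r1 k ki rj[OF kS]] .
    finally show ?thesis .
  qed
  have sU: "summable (\<lambda>i. \<bar>d i\<bar> * U i)"
  proof (rule summable_comparison_test')
    show "summable (\<lambda>i. \<bar>d i\<bar> * aa r k ^ (Suc i - k))"
      unfolding d_def by (rule tail_summ2[OF sx ak k])
    fix i assume "i \<ge> k - 1"
    thus "norm (\<bar>d i\<bar> * U i) \<le> \<bar>d i\<bar> * aa r k ^ (Suc i - k)"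
      using Ub Unn by (simp add: abs_mult mult_left_mono)
  qed
  have sU': "(\<lambda>i. \<bar>d i\<bar> * U i) summable_on UNIV"
    by (rule summable_nonneg_imp_summable_on[OF sU]) (use Unn in simp)
  have absT: "((\<lambda>n. \<bar>T (i, n)\<bar>) has_sum (\<bar>d i\<bar> * U i)) (families S)" for i
  proof -
    have "(\<lambda>n. \<bar>T (i, n)\<bar>) = (\<lambda>n. \<bar>d i\<bar> * u i n)"
      unfolding T_def using unn by (auto simp: abs_mult)
    thus ?thesis using has_sum_cmult_right[OF uhs, of "\<bar>d i\<bar>" i] by simp
  qed
  have "(\<lambda>p. \<bar>T p\<bar>) summable_on Sigma UNIV (\<lambda>_. families S)"
    by (rule summable_on_SigmaI[OF absT sU']) auto
  hence "(\<lambda>p. norm (T p)) summable_on UNIV \<times> families S" by simp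
  hence Tsm: "T summable_on UNIV \<times> families S" by (rule abs_summable_summable)
  define Tot where "Tot = infsum T (UNIV \<times> families S)"
  have hT: "(T has_sum Tot) (UNIV \<times> families S)" using Tsm Tot_def by simp
  have slice1: "((\<lambda>n. T (i, n)) has_sum (d i * U i)) (families S)" for i
    unfolding T_def using has_sum_cmult_right[OF uhs, of "d i" i] by simp
  have h1: "((\<lambda>i. d i * U i) has_sum Tot) UNIV"
    by (rule has_sum_Sigma'[OF hT slice1])
  hence s1: "(\<lambda>i. d i * U i) sums Tot" by (rule has_sum_imp_sums)
  thus "summable (\<lambda>i. c (Suc i) * x ^ Suc i * (\<Prod>j\<in>S. gg r j i))"
    unfolding d_def U_def by (simp add: sums_iff)
  have TotE: "Tot = (\<Sum>i. c (Suc i) * x ^ Suc i * (\<Prod>j\<in>S. gg r j i))"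
    using s1 unfolding d_def U_def by (simp add: sums_iff)
  have h2: "((\<lambda>(n, i). T (i, n)) has_sum Tot) (families S \<times> UNIV)"
    using hT has_sum_swap by blast
  have slice2: "((\<lambda>i. T (i, n)) has_sum L n) UNIV" if n: "n \<in> families S" for n
  proof -
    have "(\<lambda>(n, i). T (i, n)) summable_on Sigma (families S) (\<lambda>_. UNIV)"
      using h2 unfolding summable_on_def by blast
    hence "(\<lambda>i. T (i, n)) summable_on UNIV"
      using summable_on_SigmaD1[of "\<lambda>n i. T (i, n)" "families S" "\<lambda>_. UNIV" n] n by simp
    hence hs: "((\<lambda>i. T (i, n)) has_sum infsum (\<lambda>i. T (i, n)) UNIV) UNIV" by simp
    have "(\<lambda>i. T (i, n)) = (\<lambda>i. c (Suc i) * scomp r S n x ^ Suc i)"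
      unfolding T_def d_def u_def scomp_pow by (simp only: fst_conv snd_conv mult.assoc)
    hence "(\<lambda>i. T (i, n)) sums L n" using L[OF n] by simp
    moreover have "(\<lambda>i. T (i, n)) sums infsum (\<lambda>i. T (i, n)) UNIV"
      using hs by (rule has_sum_imp_sums)
    ultimately have "infsum (\<lambda>i. T (i, n)) UNIV = L n" using sums_unique2 by metis
    thus ?thesis using hs by simp
  qed
  have "(L has_sum Tot) (families S)"
    by (rule has_sum_Sigma'[OF h2[unfolded case_prod_unfold] ]) (use slice2 in simp)
  thus "(L has_sum (\<Sum>i. c (Suc i) * x ^ Suc i * (\<Prod>j\<in>S. gg r j i))) (families S)"
    using TotE by simp
qed

definition GG :: "(nat \<Rightarrow> real) \<Rightarrow> real \<Rightarrow> real \<Rightarrow> nat set \<Rightarrow> real" where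
  "GG c x r S = (\<Sum>i. c (Suc i) * x ^ Suc i * (\<Prod>j\<in>S. gg r j i))"

lemma between_scale:
  fixes l x :: real
  assumes "0 \<le> l" "l \<le> 1" shows "l * x \<in> between0 x"
proof (cases "0 \<le> x")
  case True
  have "0 \<le> l * x" using assms True by simp
  moreover have "l * x \<le> 1 * x" using assms True by (intro mult_right_mono)
  ultimately show ?thesis using True by (simp add: between0_def)
next
  case False
  have "l * x \<le> 0" using assms False by (simp add: mult_nonneg_nonpos)
  moreover have "1 * x \<le> l * x" using assms False by (intro mult_right_mono_neg) auto
  ultimately show ?thesis using False by (simp add: between0_def)
qed

lemma scomp_between:
  fixes r x :: real
  assumes r1: "1 < r" and rk: "r ^ k - 1 < 1" and S: "S \<subseteq> {1..k}"
  shows "scomp r S n x \<in> between0 x"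
proof -
  have fS: "finite S" using S finite_subset by blast
  have b: "0 \<le> aa r j / r ^ n j \<and> aa r j / r ^ n j \<le> 1" if j: "j \<in> S" for j
  proof -
    have j1: "1 \<le> j" using S j by auto
    have "r ^ j \<le> r ^ k" using S j r1 by (intro power_increasing) auto
    hence rj: "r ^ j - 1 < 1" using rk by simp
    have a0: "0 < aa r j" and a1: "aa r j < 1" using aa_pos[OF r1 j1] aa_lt1[OF r1 j1 rj] by auto
    have rp: "1 \<le> r ^ n j" using r1 by (simp add: one_le_power)
    have "aa r j \<le> r ^ n j" using a1 rp by simp
    thus ?thesis using a0 rp by (simp add: divide_le_eq)
  qed
  have "0 \<le> (\<Prod>j\<in>S. aa r j / r ^ n j)" using b by (intro prod_nonneg) auto
  moreover have "(\<Prod>j\<in>S. aa r j / r ^ n j) \<le> 1" using b by (intro prod_le_1) auto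
  ultimately have "(\<Prod>j\<in>S. aa r j / r ^ n j) * x \<in> between0 x" by (rule between_scale)
  thus ?thesis unfolding scomp_def aa_def .
qed

lemma prod_S:
  fixes f :: "real \<Rightarrow> real" and c :: "nat \<Rightarrow> real" and x r :: real
  assumes series: "\<forall>y\<in>between0 x. summable (\<lambda>i. c (Suc i) * y ^ Suc i) \<and>
                    f y = exp (\<Sum>i. c (Suc i) * y ^ Suc i)"
    and r1: "1 < r" and rk: "r ^ k - 1 < 1" and k: "1 \<le> k" and S: "S \<subseteq> {1..k}" and kS: "k \<in> S"
  shows "has_prod_on (\<lambda>n. f (scomp r S n x)) (families S) (exp (GG c x r S))"
    and "prod_on (\<lambda>n. f (scomp r S n x)) (families S) = exp (GG c x r S)"
    and "summable (\<lambda>i. c (Suc i) * x ^ Suc i * (\<Prod>j\<in>S. gg r j i))"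
proof -
  have xb: "x \<in> between0 x" by (simp add: between0_def)
  have sx: "summable (\<lambda>i. c (Suc i) * x ^ Suc i)" using series xb by blast
  define L where "L n = (\<Sum>i. c (Suc i) * scomp r S n x ^ Suc i)" for n
  have yb: "scomp r S n x \<in> between0 x" for n by (rule scomp_between[OF r1 rk S])
  have Ls: "(\<lambda>i. c (Suc i) * scomp r S n x ^ Suc i) sums L n" for n
    unfolding L_def using series yb[of n] by (simp add: summable_sums)
  have fL: "f (scomp r S n x) = exp (L n)" for n unfolding L_def using series yb[of n] by blast
  have hs: "(L has_sum GG c x r S) (families S)"
    unfolding GG_def by (rule main_S(1)[OF sx r1 rk k S kS Ls])
  show "summable (\<lambda>i. c (Suc i) * x ^ Suc i * (\<Prod>j\<in>S. gg r j i))"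
    by (rule main_S(2)[OF sx r1 rk k S kS Ls])
  have lim: "((\<lambda>F. exp (sum L F)) \<longlongrightarrow> exp (GG c x r S)) (finite_subsets_at_top (families S))"
    using hs unfolding has_sum_def by (intro tendsto_exp)
  have ev: "\<forall>\<^sub>F F in finite_subsets_at_top (families S). prod (\<lambda>n. f (scomp r S n x)) F = exp (sum L F)"
    by (intro eventually_finite_subsets_at_top_weakI) (simp add: exp_sum fL)
  show hp: "has_prod_on (\<lambda>n. f (scomp r S n x)) (families S) (exp (GG c x r S))"
    unfolding has_prod_on_def using tendsto_cong[OF ev] lim by simp
  show "prod_on (\<lambda>n. f (scomp r S n x)) (families S) = exp (GG c x r S)"
    unfolding prod_on_def
  proof (rule the_equality)
    fix P assume "has_prod_on (\<lambda>n. f (scomp r S n x)) (families S) P"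
    thus "P = exp (GG c x r S)" using hp unfolding has_prod_on_def
      by (intro tendsto_unique[OF finite_subsets_at_top_neq_bot])
  qed (rule hp)
qed

lemma comb:
  fixes g :: "nat \<Rightarrow> real"
  assumes k: "1 \<le> k"
  shows "(\<Sum>S\<in>{S. S \<subseteq> {1..k} \<and> k \<in> S}. (-1) ^ Suc (card S) * (\<Prod>j\<in>S. g j))
       = g k * (\<Prod>j\<in>{1..<k}. 1 - g j)"
proof -
  have A: "{S. S \<subseteq> {1..k} \<and> k \<in> S} = insert k ` Pow {1..<k}"
  proof (intro equalityI subsetI)
    fix S assume "S \<in> {S. S \<subseteq> {1..k} \<and> k \<in> S}"
    hence S: "S \<subseteq> {1..k}" "k \<in> S" by auto
    have "S = insert k (S - {k})" using S by auto
    moreover have "S - {k} \<in> Pow {1..<k}" using S by auto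
    ultimately show "S \<in> insert k ` Pow {1..<k}" by blast
  next
    fix S assume "S \<in> insert k ` Pow {1..<k}"
    thus "S \<in> {S. S \<subseteq> {1..k} \<and> k \<in> S}" using k by auto
  qed
  have inj: "inj_on (insert k) (Pow {1..<k})"
    by (rule inj_onI) (metis Pow_iff atLeastLessThan_iff insert_ident less_irrefl subsetD)
  have trm: "(-1) ^ Suc (card (insert k T)) * (\<Prod>j\<in>insert k T. g j) = g k * (\<Prod>j\<in>T. - g j)"
    if "T \<in> Pow {1..<k}" for T
  proof -
    have fT: "finite T" and kT: "k \<notin> T" using that finite_subset by auto
    have "(\<Prod>j\<in>T. - g j) = (\<Prod>j\<in>T. (-1) * g j)" by simp
    also have "\<dots> = (-1) ^ card T * (\<Prod>j\<in>T. g j)" by (simp only: prod.distrib prod_constant)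
    finally show ?thesis using fT kT by simp
  qed
  have "(\<Sum>S\<in>{S. S \<subseteq> {1..k} \<and> k \<in> S}. (-1) ^ Suc (card S) * (\<Prod>j\<in>S. g j))
      = (\<Sum>T\<in>Pow {1..<k}. (-1) ^ Suc (card (insert k T)) * (\<Prod>j\<in>insert k T. g j))"
    unfolding A by (simp only: sum.reindex[OF inj] comp_def)
  also have "\<dots> = (\<Sum>T\<in>Pow {1..<k}. g k * (\<Prod>j\<in>T. - g j))"
    by (intro sum.cong refl trm)
  also have "\<dots> = g k * (\<Sum>T\<in>Pow {1..<k}. (\<Prod>j\<in>T. - g j) * (\<Prod>j\<in>{1..<k} - T. 1))"
    by (simp add: sum_distrib_left)
  also have "(\<Sum>T\<in>Pow {1..<k}. (\<Prod>j\<in>T. - g j) * (\<Prod>j\<in>{1..<k} - T. 1)) = (\<Prod>j\<in>{1..<k}. - g j + 1)"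
    by (rule prod_add[symmetric]) simp
  finally show ?thesis by simp
qed

definition VV :: "nat \<Rightarrow> real \<Rightarrow> nat \<Rightarrow> real" where
  "VV k r i = gg r k i * (\<Prod>j\<in>{1..<k}. 1 - gg r j i)"

definition WW :: "(nat \<Rightarrow> real) \<Rightarrow> real \<Rightarrow> nat \<Rightarrow> real \<Rightarrow> real" where
  "WW c x k r = (\<Sum>S\<in>{S. S \<subseteq> {1..k} \<and> k \<in> S}. (-1) ^ Suc (card S) * GG c x r S)"

lemma finA: "finite {S. S \<subseteq> {1..(k::nat)} \<and> k \<in> S}"
  by (rule finite_subset[of _ "Pow {1..k}"]) auto

lemma W_sums:
  fixes f :: "real \<Rightarrow> real" and c :: "nat \<Rightarrow> real" and x r :: real
  assumes series: "\<forall>y\<in>between0 x. summable (\<lambda>i. c (Suc i) * y ^ Suc i) \<and>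
                    f y = exp (\<Sum>i. c (Suc i) * y ^ Suc i)"
    and r1: "1 < r" and rk: "r ^ k - 1 < 1" and k: "1 \<le> k"
  shows "(\<lambda>i. c (Suc i) * x ^ Suc i * VV k r i) sums WW c x k r"
proof -
  let ?A = "{S. S \<subseteq> {1..k} \<and> k \<in> S}"
  have "(\<lambda>i. (-1) ^ Suc (card S) * (c (Suc i) * x ^ Suc i * (\<Prod>j\<in>S. gg r j i))) sums ((-1) ^ Suc (card S) * GG c x r S)"
    if "S \<in> ?A" for S
    unfolding GG_def using prod_S(3)[OF series r1 rk k, of S] that
    by (intro sums_mult summable_sums) auto
  hence "(\<lambda>i. \<Sum>S\<in>?A. (-1) ^ Suc (card S) * (c (Suc i) * x ^ Suc i * (\<Prod>j\<in>S. gg r j i))) sums WW c x k r"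
    unfolding WW_def by (rule sums_sum)
  moreover have "(\<Sum>S\<in>?A. (-1) ^ Suc (card S) * (c (Suc i) * x ^ Suc i * (\<Prod>j\<in>S. gg r j i)))
      = c (Suc i) * x ^ Suc i * VV k r i" for i
  proof -
    have "(\<Sum>S\<in>?A. (-1) ^ Suc (card S) * (c (Suc i) * x ^ Suc i * (\<Prod>j\<in>S. gg r j i)))
       = c (Suc i) * x ^ Suc i * (\<Sum>S\<in>?A. (-1) ^ Suc (card S) * (\<Prod>j\<in>S. gg r j i))"
      by (simp add: sum_distrib_left mult_ac)
    also have "\<dots> = c (Suc i) * x ^ Suc i * VV k r i"
      unfolding VV_def using comb[OF k, of "\<lambda>j. gg r j i"] by simp
    finally show ?thesis .
  qed
  ultimately show ?thesis by simp
qed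

lemma quot_eq:
  fixes f :: "real \<Rightarrow> real" and c :: "nat \<Rightarrow> real" and x r :: real
  assumes series: "\<forall>y\<in>between0 x. summable (\<lambda>i. c (Suc i) * y ^ Suc i) \<and>
                    f y = exp (\<Sum>i. c (Suc i) * y ^ Suc i)"
    and r1: "1 < r" and rk: "r ^ k - 1 < 1" and k: "1 \<le> k"
  shows "(\<Prod>S\<in>{S. S \<subseteq> {1..k} \<and> k \<in> S \<and> odd (card S)}.
                    prod_on (\<lambda>n. f (scomp r S n x)) (families S))
              / (\<Prod>S\<in>{S. S \<subseteq> {1..k} \<and> k \<in> S \<and> even (card S)}.
                    prod_on (\<lambda>n. f (scomp r S n x)) (families S)) = exp (WW c x k r)"
proof -
  let ?A = "{S. S \<subseteq> {1..k} \<and> k \<in> S}"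
  let ?O = "{S. S \<subseteq> {1..k} \<and> k \<in> S \<and> odd (card S)}"
  let ?E = "{S. S \<subseteq> {1..k} \<and> k \<in> S \<and> even (card S)}"
  have fO: "finite ?O" by (rule finite_subset[OF _ finA[of k]]) auto
  have fE: "finite ?E" by (rule finite_subset[OF _ finA[of k]]) auto
  have po: "(\<Prod>S\<in>?O. prod_on (\<lambda>n. f (scomp r S n x)) (families S)) = exp (\<Sum>S\<in>?O. GG c x r S)"
    unfolding exp_sum[OF fO] using prod_S(2)[OF series r1 rk k] by (intro prod.cong refl) auto
  have pe: "(\<Prod>S\<in>?E. prod_on (\<lambda>n. f (scomp r S n x)) (families S)) = exp (\<Sum>S\<in>?E. GG c x r S)"
    unfolding exp_sum[OF fE] using prod_S(2)[OF series r1 rk k] by (intro prod.cong refl) auto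
  have AU: "?A = ?O \<union> ?E" by auto
  have "WW c x k r = (\<Sum>S\<in>?O. (-1) ^ Suc (card S) * GG c x r S) + (\<Sum>S\<in>?E. (-1) ^ Suc (card S) * GG c x r S)"
    unfolding WW_def AU by (rule sum.union_disjoint[OF fO fE]) auto
  also have "(\<Sum>S\<in>?O. (-1) ^ Suc (card S) * GG c x r S) = (\<Sum>S\<in>?O. GG c x r S)"
    by (intro sum.cong refl) auto
  also have "(\<Sum>S\<in>?E. (-1) ^ Suc (card S) * GG c x r S) = (\<Sum>S\<in>?E. - GG c x r S)"
    by (intro sum.cong refl) auto
  finally have "WW c x k r = (\<Sum>S\<in>?O. GG c x r S) - (\<Sum>S\<in>?E. GG c x r S)"
    by (simp add: sum_negf)
  thus ?thesis unfolding po pe by (simp add: exp_diff)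
qed

lemma ev_E:
  assumes k: "1 \<le> k"
  shows "\<forall>\<^sub>F r in at_right 1. 1 < r \<and> r ^ k - 1 < ((1::real)/2) ^ k"
proof -
  have "((\<lambda>r::real. r ^ k - 1) \<longlongrightarrow> 1 ^ k - 1) (at_right 1)" by (intro tendsto_intros)
  hence "((\<lambda>r::real. r ^ k - 1) \<longlongrightarrow> 0) (at_right 1)" by simp
  moreover have "(0::real) < (1/2) ^ k" by simp
  ultimately have "\<forall>\<^sub>F r in at_right 1. r ^ k - 1 < ((1::real)/2) ^ k" by (rule order_tendstoD(2))
  thus ?thesis using eventually_at_right_less[of "1::real"] by eventually_elim auto
qed

lemma W_limit:
  fixes f :: "real \<Rightarrow> real" and c :: "nat \<Rightarrow> real" and x :: real
  assumes series: "\<forall>y\<in>between0 x. summable (\<lambda>i. c (Suc i) * y ^ Suc i) \<and>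
                    f y = exp (\<Sum>i. c (Suc i) * y ^ Suc i)"
    and k: "1 \<le> k"
  shows "((\<lambda>r. WW c x k r) \<longlongrightarrow> c k * x ^ k) (at_right 1)"
proof -
  define d where "d i = c (Suc i) * x ^ Suc i" for i
  have xb: "x \<in> between0 x" by (simp add: between0_def)
  have sx: "summable (\<lambda>i. c (Suc i) * x ^ Suc i)" using series xb by blast
  define D where "D i = (if k \<le> i then \<bar>d i\<bar> * (1/2) ^ (i - k) else 0)" for i
  have Dnn: "0 \<le> D i" for i unfolding D_def by simp
  have sD: "summable D"
  proof (rule summable_comparison_test')
    show "summable (\<lambda>i. \<bar>c (Suc i) * x ^ Suc i\<bar> * (1/2) ^ (Suc i - Suc k))"
      by (rule tail_summ2[OF sx]) auto
    fix i :: nat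
    show "norm (D i) \<le> \<bar>c (Suc i) * x ^ Suc i\<bar> * (1/2) ^ (Suc i - Suc k)"
      unfolding D_def d_def by simp
  qed
  define M where "M = suminf D"
  let ?E = "\<lambda>r::real. 1 < r \<and> r ^ k - 1 < ((1::real)/2) ^ k"
  have kk: "Suc (k - 1) = k" using k by simp
  have bound: "\<bar>WW c x k r - d (k - 1) * VV k r (k - 1)\<bar> \<le> aa r k * M" if E: "?E r" for r
  proof -
    have r1: "1 < r" using E by simp
    have hk: "((1::real)/2) ^ k \<le> 1" by (rule power_le_one) auto
    have rk: "r ^ k - 1 < 1" using E hk by linarith
    have rkh: "r ^ k - 1 \<le> (1/2) ^ k" using E by simp
    have ak0: "0 < aa r k" using aa_pos[OF r1 k] .
    have akh: "aa r k \<le> 1/2" using aa_le_half[OF r1 k rkh] .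
    have rj: "r ^ j - 1 < 1" if "j \<le> k" for j
    proof -
      have "r ^ j \<le> r ^ k" using that r1 by (intro power_increasing) auto
      thus ?thesis using rk by simp
    qed
    define Q where "Q i = d i * VV k r i - (if i = k - 1 then d i * VV k r i else 0)" for i
    have ws: "(\<lambda>i. d i * VV k r i) sums WW c x k r"
      unfolding d_def by (rule W_sums[OF series r1 rk k])
    have Qs: "Q sums (WW c x k r - d (k - 1) * VV k r (k - 1))"
      unfolding Q_def by (intro sums_diff ws sums_single)
    have Qb: "\<bar>Q i\<bar> \<le> aa r k * D i" for i
    proof (cases "i = k - 1")
      case True thus ?thesis unfolding Q_def using ak0 Dnn[of i] by simp
    next
      case False
      show ?thesis
      proof (cases "i < k - 1")
        case True
        have j: "Suc i \<in> {1..<k}" using True by auto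
        have "gg r (Suc i) i = 1" using gg_diag[OF r1, of "Suc i"] by simp
        hence "(\<Prod>j\<in>{1..<k}. 1 - gg r j i) = 0" using j by (intro prod_zero) auto
        hence "VV k r i = 0" unfolding VV_def by simp
        thus ?thesis unfolding Q_def using ak0 Dnn[of i] False by simp
      next
        case False2: False
        hence ki: "k \<le> i" using \<open>i \<noteq> k - 1\<close> by auto
        have P: "\<bar>\<Prod>j\<in>{1..<k}. 1 - gg r j i\<bar> \<le> 1"
          unfolding abs_prod
        proof (rule prod_le_1)
          fix j assume j: "j \<in> {1..<k}"
          have j1: "1 \<le> j" "j \<le> Suc i" using j ki by auto
          have "gg r j i \<le> aa r j ^ (Suc i - j)" using gg_bounds(2)[OF r1 j1 rj] j by auto
          also have "\<dots> \<le> 1" using aa_pos[OF r1 j1(1)] aa_lt1[OF r1 j1(1) rj] j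
            by (intro power_le_one) auto
          finally show "0 \<le> \<bar>1 - gg r j i\<bar> \<and> \<bar>1 - gg r j i\<bar> \<le> 1"
            using gg_bounds(1)[OF r1 j1 rj] j by auto
        qed
        have g0: "0 \<le> gg r k i" using gg_bounds(1)[OF r1 k _ rj] ki by auto
        have "\<bar>VV k r i\<bar> \<le> gg r k i"
          unfolding VV_def abs_mult using P g0 by (simp add: mult_left_le)
        also have "\<dots> \<le> aa r k ^ (Suc i - k)" using gg_bounds(2)[OF r1 k _ rj] ki by auto
        also have "\<dots> = aa r k * aa r k ^ (i - k)" using ki by (simp add: Suc_diff_le)
        also have "\<dots> \<le> aa r k * (1/2) ^ (i - k)"
          using ak0 akh by (intro mult_left_mono power_mono) auto
        finally have Vb: "\<bar>VV k r i\<bar> \<le> aa r k * (1/2) ^ (i - k)" .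
        have "\<bar>Q i\<bar> = \<bar>d i\<bar> * \<bar>VV k r i\<bar>" unfolding Q_def using \<open>i \<noteq> k - 1\<close> by (simp add: abs_mult)
        also have "\<dots> \<le> \<bar>d i\<bar> * (aa r k * (1/2) ^ (i - k))" using Vb by (intro mult_left_mono) auto
        also have "\<dots> = aa r k * D i" unfolding D_def using ki by simp
        finally show ?thesis .
      qed
    qed
    have sQ: "summable (\<lambda>i. \<bar>Q i\<bar>)"
      by (rule summable_comparison_test'[OF summable_mult[OF sD, of "aa r k"]]) (use Qb in simp)
    have "\<bar>WW c x k r - d (k - 1) * VV k r (k - 1)\<bar> = \<bar>suminf Q\<bar>" using Qs by (simp add: sums_iff)
    also have "\<dots> \<le> (\<Sum>i. \<bar>Q i\<bar>)" by (rule summable_rabs[OF sQ])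
    also have "\<dots> \<le> (\<Sum>i. aa r k * D i)" by (rule suminf_le[OF Qb sQ summable_mult[OF sD]])
    also have "\<dots> = aa r k * M" unfolding M_def by (rule suminf_mult[OF sD])
    finally show ?thesis .
  qed
  have lim0: "((\<lambda>r. aa r k * M) \<longlongrightarrow> 0) (at_right 1)"
    using tendsto_mult_left_zero[OF aa_tendsto[OF k], of M] by (simp add: mult.commute)
  have limR: "((\<lambda>r. WW c x k r - d (k - 1) * VV k r (k - 1)) \<longlongrightarrow> 0) (at_right 1)"
  proof (rule Lim_null_comparison[OF _ lim0])
    show "\<forall>\<^sub>F r in at_right 1. norm (WW c x k r - d (k - 1) * VV k r (k - 1)) \<le> aa r k * M"
      using ev_E[OF k] by eventually_elim (use bound in simp)
  qed
  have gj: "((\<lambda>r. gg r j (k - 1)) \<longlongrightarrow> 0) (at_right 1)" if j: "j \<in> {1..<k}" for j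
  proof (rule tendsto_sandwich[OF _ _ tendsto_const aa_tendsto])
    have j1: "1 \<le> j" "j \<le> Suc (k - 1)" using j by auto
    show "\<forall>\<^sub>F r in at_right 1. 0 \<le> gg r j (k - 1)"
      using ev_E[OF k]
    proof eventually_elim
      case (elim r)
      have "r ^ j \<le> r ^ k" using j elim by (intro power_increasing) auto
      moreover have "((1::real)/2) ^ k \<le> 1" by (rule power_le_one) auto
      ultimately have "r ^ j - 1 < 1" using elim by linarith
      thus ?case using gg_bounds(1)[OF _ j1] elim by auto
    qed
    show "\<forall>\<^sub>F r in at_right 1. gg r j (k - 1) \<le> aa r j"
      using ev_E[OF k]
    proof eventually_elim
      case (elim r)
      have "r ^ j \<le> r ^ k" using j elim by (intro power_increasing) auto
      moreover have "((1::real)/2) ^ k \<le> 1" by (rule power_le_one) auto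
      ultimately have rj: "r ^ j - 1 < 1" using elim by linarith
      have r1: "1 < r" using elim by simp
      have "gg r j (k - 1) \<le> aa r j ^ (Suc (k - 1) - j)" using gg_bounds(2)[OF r1 j1 rj] .
      also have "\<dots> \<le> aa r j ^ 1"
        using aa_pos[OF r1 j1(1)] aa_lt1[OF r1 j1(1) rj] j
        by (intro power_decreasing) auto
      finally show ?case by simp
    qed
    show "1 \<le> j" using j by simp
  qed
  have limP: "((\<lambda>r. \<Prod>j\<in>{1..<k}. 1 - gg r j (k - 1)) \<longlongrightarrow> (\<Prod>j\<in>{1..<k}. 1 - 0)) (at_right 1)"
    by (intro tendsto_prod tendsto_diff tendsto_const gj)
  have evV: "\<forall>\<^sub>F r in at_right 1. (\<Prod>j\<in>{1..<k}. 1 - gg r j (k - 1)) = VV k r (k - 1)"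
    using ev_E[OF k] by eventually_elim (use gg_diag[OF _ k] in \<open>simp add: VV_def\<close>)
  have limV: "((\<lambda>r. VV k r (k - 1)) \<longlongrightarrow> 1) (at_right 1)"
    using tendsto_cong[OF evV] limP by simp
  have "((\<lambda>r. d (k - 1) * VV k r (k - 1) + (WW c x k r - d (k - 1) * VV k r (k - 1))) \<longlongrightarrow> d (k - 1) * 1 + 0) (at_right 1)"
    by (intro tendsto_add tendsto_mult tendsto_const limV limR)
  moreover have "d (k - 1) = c k * x ^ k" unfolding d_def kk ..
  ultimately show ?thesis by simp
qed

theorem lemma4:
  fixes f :: "real \<Rightarrow> real" and c :: "nat \<Rightarrow> real" and x :: real and k :: nat
  assumes analytic: "real_analytic_on f (between0 x)"
    and nonzero: "\<forall>y\<in>between0 x. f y \<noteq> 0"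
    and f0: "f 0 = 1"
    and series: "\<forall>y\<in>between0 x. summable (\<lambda>i. c (Suc i) * y ^ Suc i) \<and>
                    f y = exp (\<Sum>i. c (Suc i) * y ^ Suc i)"
    and k: "k \<ge> 1"
  shows "(\<forall>\<^sub>F r in at_right 1. \<forall>S. S \<subseteq> {1..k} \<and> k \<in> S \<longrightarrow>
            (\<exists>P. has_prod_on (\<lambda>n. f (scomp r S n x)) (families S) P))
       \<and> ((\<lambda>r. (\<Prod>S\<in>{S. S \<subseteq> {1..k} \<and> k \<in> S \<and> odd (card S)}.
                    prod_on (\<lambda>n. f (scomp r S n x)) (families S))
              / (\<Prod>S\<in>{S. S \<subseteq> {1..k} \<and> k \<in> S \<and> even (card S)}.
                    prod_on (\<lambda>n. f (scomp r S n x)) (families S)))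
          \<longlongrightarrow> exp (c k * x ^ k)) (at_right 1)"
proof
  have rk: "r ^ k - 1 < 1" if "r ^ k - 1 < ((1::real)/2) ^ k" for r :: real
  proof -
    have "((1::real)/2) ^ k \<le> 1" by (rule power_le_one) auto
    thus ?thesis using that by linarith
  qed
  show "\<forall>\<^sub>F r in at_right 1. \<forall>S. S \<subseteq> {1..k} \<and> k \<in> S \<longrightarrow>
            (\<exists>P. has_prod_on (\<lambda>n. f (scomp r S n x)) (families S) P)"
    using ev_E[OF k]
  proof eventually_elim
    case (elim r)
    show ?case using prod_S(1)[OF series _ rk k] elim by blast
  qed
  have ev: "\<forall>\<^sub>F r in at_right 1. exp (WW c x k r) = (\<Prod>S\<in>{S. S \<subseteq> {1..k} \<and> k \<in> S \<and> odd (card S)}.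
                    prod_on (\<lambda>n. f (scomp r S n x)) (families S))
              / (\<Prod>S\<in>{S. S \<subseteq> {1..k} \<and> k \<in> S \<and> even (card S)}.
                    prod_on (\<lambda>n. f (scomp r S n x)) (families S))"
    using ev_E[OF k]
  proof eventually_elim
    case (elim r)
    show ?case using quot_eq[OF series _ rk k] elim by simp
  qed
  have "((\<lambda>r. exp (WW c x k r)) \<longlongrightarrow> exp (c k * x ^ k)) (at_right 1)"
    by (intro tendsto_exp W_limit[OF series k])
  thus "((\<lambda>r. (\<Prod>S\<in>{S. S \<subseteq> {1..k} \<and> k \<in> S \<and> odd (card S)}.
                    prod_on (\<lambda>n. f (scomp r S n x)) (families S))
              / (\<Prod>S\<in>{S. S \<subseteq> {1..k} \<and> k \<in> S \<and> even (card S)}.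
                    prod_on (\<lambda>n. f (scomp r S n x)) (families S)))
          \<longlongrightarrow> exp (c k * x ^ k)) (at_right 1)"
    using tendsto_cong[OF ev] by simp
qed

end
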